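(* Let $A$ be a commutative noetherian local ring and let $x,y\in A$ be an exact pair of zero divisors. Then the following are equivalent: (i) $x$ is regular on $A/(y)$; (ii) $y$ is regular on $A/(x)$; (iii) $(x)\cap(y)=0$.
   Context: Two non-units $x,y\in A$ form an exact pair of zero divisors if $\operatorname{Ann}_A(x)=(y)$ and $\operatorname{Ann}_A(y)=(x)$. An element $a\in A$ is regular on a finitely generated $A$-module $M$ if $a$ is a non-unit and multiplication by $a$ on $M$ is injective. *)

theory Defs
  imports "HOL-Algebra.Algebra"
begin

definition local_ring :: "('a, 'b) ring_scheme \<Rightarrow> bool" where
  "local_ring R \<longleftrightarrow> (\<exists>!M. maximalideal M R)"

definition ann :: "('a, 'b) ring_scheme \<Rightarrow> 'a \<Rightarrow> 'a set" where
  "ann R x = {a \<in> carrier R. a \<otimes>\<^bsub>R\<^esub> x = \<zero>\<^bsub>R\<^esub>}"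

definition exact_zero_divisors :: "('a, 'b) ring_scheme \<Rightarrow> 'a \<Rightarrow> 'a \<Rightarrow> bool" where
  "exact_zero_divisors R x y \<longleftrightarrow>
     x \<in> carrier R \<and> y \<in> carrier R \<and> x \<notin> Units R \<and> y \<notin> Units R \<and>
     ann R x = PIdl\<^bsub>R\<^esub> y \<and> ann R y = PIdl\<^bsub>R\<^esub> x"

text \<open>a is regular on the cyclic module R/I: a is a non-unit and multiplication by a
  on R/I is injective, i.e. a*b in I implies b in I.\<close>
definition regular_on_quot :: "('a, 'b) ring_scheme \<Rightarrow> 'a \<Rightarrow> 'a set \<Rightarrow> bool" where
  "regular_on_quot R a I \<longleftrightarrow>
     a \<in> carrier R \<and> a \<notin> Units R \<and>
     (\<forall>b \<in> carrier R. a \<otimes>\<^bsub>R\<^esub> b \<in> I \<longrightarrow> b \<in> I)"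

end

theory Submission
  imports Defs
begin

lemma key:
  fixes A (structure)
  assumes cr: "cring A" and xc: "x \<in> carrier A" and yc: "y \<in> carrier A"
    and xu: "x \<notin> Units A" and ann: "ann A x = PIdl y"
  shows "regular_on_quot A x (PIdl y) \<longleftrightarrow> PIdl x \<inter> PIdl y = {\<zero>}"
proof -
  interpret cring A by (rule cr)
  have z1: "\<zero> \<in> PIdl x" unfolding cgenideal_def using xc
    by (auto intro!: exI[of _ "\<zero>"])
  have z2: "\<zero> \<in> PIdl y" unfolding cgenideal_def using yc
    by (auto intro!: exI[of _ "\<zero>"])
  show ?thesis
  proof
    assume r: "regular_on_quot A x (PIdl y)"
    show "PIdl x \<inter> PIdl y = {\<zero>}"
    proof
      show "PIdl x \<inter> PIdl y \<subseteq> {\<zero>}"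
      proof
        fix z assume "z \<in> PIdl x \<inter> PIdl y"
        then obtain b where b: "b \<in> carrier A" "z = b \<otimes> x" and zy: "z \<in> PIdl y"
          unfolding cgenideal_def by auto
        have "x \<otimes> b \<in> PIdl y" using b zy xc by (simp add: m_comm)
        then have "b \<in> PIdl y" using r b unfolding regular_on_quot_def by blast
        then have "b \<in> ann A x" using ann by simp
        then show "z \<in> {\<zero>}" using b unfolding ann_def by simp
      qed
      show "{\<zero>} \<subseteq> PIdl x \<inter> PIdl y" using z1 z2 by simp
    qed
  next
    assume i: "PIdl x \<inter> PIdl y = {\<zero>}"
    show "regular_on_quot A x (PIdl y)"
      unfolding regular_on_quot_def
    proof (intro conjI ballI impI)
      fix b assume b: "b \<in> carrier A" and xb: "x \<otimes> b \<in> PIdl y"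
      have "x \<otimes> b \<in> PIdl x" unfolding cgenideal_def using b xc
        by (auto simp: m_comm)
      then have "b \<otimes> x = \<zero>" using xb i b xc by (auto simp: m_comm)
      then have "b \<in> ann A x" using b unfolding ann_def by simp
      then show "b \<in> PIdl y" using ann by simp
    qed (use xc xu in auto)
  qed
qed

theorem lemma2p2:
  fixes A (structure)
  assumes "cring A" and "noetherian_ring A" and "local_ring A"
    and "exact_zero_divisors A x y"
  shows "(regular_on_quot A x (PIdl y) \<longleftrightarrow> regular_on_quot A y (PIdl x)) \<and>
         (regular_on_quot A y (PIdl x) \<longleftrightarrow> PIdl x \<inter> PIdl y = {\<zero>})"
proof -
  have e: "x \<in> carrier A" "y \<in> carrier A" "x \<notin> Units A" "y \<notin> Units A"
    "ann A x = PIdl y" "ann A y = PIdl x"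
    using assms(4) unfolding exact_zero_divisors_def by auto
  have 1: "regular_on_quot A x (PIdl y) \<longleftrightarrow> PIdl x \<inter> PIdl y = {\<zero>}"
    using key[OF assms(1) e(1,2,3,5)] .
  have 2: "regular_on_quot A y (PIdl x) \<longleftrightarrow> PIdl y \<inter> PIdl x = {\<zero>}"
    using key[OF assms(1) e(2,1,4,6)] .
  show ?thesis using 1 2 by (simp add: Int_commute)
qed

end
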